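(* Let $\varphi$ be a Schwartz function on $\mathbb{R}$ such that $d=\operatorname{dist}(\operatorname{supp}\hat\varphi,0)>0$, and let $p$ be a polynomial of degree $n$. Then there is a constant $C>0$ (depending on $\varphi$ and $p$) such that \[ |p(x)(\varphi\ast P_y)(x)|\le C(1+y^n)\frac{e^{-2\pi dy}}{y^{1/2}},\qquad x\in\mathbb{R},\ y>0. \]
   Context: $P_y(t)=\frac{1}{\pi}\frac{y}{t^2+y^2}$ is the Poisson kernel of the upper half plane, and $\hat\varphi(\xi)=\int\varphi(x)e^{-2\pi ix\xi}dx$. *)

theory Defs
  imports "HOL-Analysis.Analysis" "HOL-Computational_Algebra.Polynomial"
begin

definition schwartz :: "(real \<Rightarrow> complex) \<Rightarrow> bool" where
  "schwartz \<phi> \<longleftrightarrow> (\<exists>D :: nat \<Rightarrow> real \<Rightarrow> complex.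
      D 0 = \<phi> \<and>
      (\<forall>m x. (D m has_vector_derivative D (Suc m) x) (at x)) \<and>
      (\<forall>k m. \<exists>B. \<forall>x. \<bar>x\<bar> ^ k * norm (D m x) \<le> B))"

definition fourier :: "(real \<Rightarrow> complex) \<Rightarrow> real \<Rightarrow> complex" where
  "fourier \<phi> \<xi> = (\<integral>x. \<phi> x * cis (- 2 * pi * x * \<xi>) \<partial>lborel)"

definition fsupp :: "(real \<Rightarrow> complex) \<Rightarrow> real set" where
  "fsupp f = closure {x. f x \<noteq> 0}"

definition poisson_kernel :: "real \<Rightarrow> real \<Rightarrow> real" where
  "poisson_kernel y t = (1 / pi) * (y / (t\<^sup>2 + y\<^sup>2))"

definition conv :: "(real \<Rightarrow> complex) \<Rightarrow> (real \<Rightarrow> complex) \<Rightarrow> real \<Rightarrow> complex" where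
  "conv f g x = (\<integral>t. f (x - t) * g t \<partial>lborel)"

end

theory Submission
  imports Defs "HOL-Probability.Characteristic_Functions" "HOL-Probability.Sinc_Integral"
begin

definition rapid :: "(real \<Rightarrow> complex) \<Rightarrow> bool" where
  "rapid g \<longleftrightarrow> continuous_on UNIV g \<and> (\<forall>k. \<exists>B. \<forall>t. \<bar>t\<bar> ^ k * norm (g t) \<le> B)"

lemma rapid_cont: "rapid g \<Longrightarrow> continuous_on UNIV g"
  by (simp add: rapid_def)

lemma rapid_meas[measurable_dest]: "rapid g \<Longrightarrow> g \<in> borel_measurable borel"
  by (simp add: rapid_def borel_measurable_continuous_onI)

lemma rapid_bound: "rapid g \<Longrightarrow> \<exists>B. \<forall>t. \<bar>t\<bar> ^ k * norm (g t) \<le> B"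
  by (simp add: rapid_def)

lemma rapid_bound0: "rapid g \<Longrightarrow> \<exists>B. \<forall>t. norm (g t) \<le> B"
  using rapid_bound[of g 0] by simp

lemma integrable_inv_sq: "integrable lborel (\<lambda>x::real. inverse (1 + x^2))"
  using integrable_inverse_1_plus_square by (simp add: set_integrable_def)

lemma rapid_integrable: assumes "rapid g" shows "integrable lborel g"
proof -
  obtain B0 where B0: "\<And>t. \<bar>t\<bar> ^ 0 * norm (g t) \<le> B0" using rapid_bound[OF assms] by blast
  obtain B2 where B2: "\<And>t. \<bar>t\<bar> ^ 2 * norm (g t) \<le> B2" using rapid_bound[OF assms] by blast
  show ?thesis
  proof (rule Bochner_Integration.integrable_bound[where f="\<lambda>x. (B0 + B2) * inverse (1 + x^2)"])
    show "integrable lborel (\<lambda>x. (B0 + B2) * inverse (1 + x^2))"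
      using integrable_inv_sq by simp
    show "g \<in> borel_measurable lborel" using assms by measurable
    show "AE x in lborel. norm (g x) \<le> norm ((B0 + B2) * inverse (1 + x^2))"
    proof (rule AE_I2)
      fix x
      have "(1 + x^2) * norm (g x) \<le> B0 + B2" using B0[of x] B2[of x] by (simp add: algebra_simps)
      moreover have "0 \<le> B0" using B0[of x] norm_ge_zero[of "g x"] by (simp del: norm_ge_zero)
      moreover have "0 \<le> B2" proof -
        have "0 \<le> \<bar>x\<bar> ^ 2 * norm (g x)" by simp
        then show ?thesis using B2[of x] by linarith
      qed
      ultimately show "norm (g x) \<le> norm ((B0 + B2) * inverse (1 + x^2))"
        by (simp add: field_simps abs_of_nonneg add_pos_nonneg)
    qed
  qed
qed

lemma rapid_pow_mult: assumes "rapid g" shows "rapid (\<lambda>t. of_real t ^ j * g t)"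
  unfolding rapid_def
proof safe
  show "continuous_on UNIV (\<lambda>t. of_real t ^ j * g t)"
    by (intro continuous_on_mult continuous_on_power continuous_on_of_real continuous_on_id rapid_cont[OF assms])
  fix k
  obtain B where B: "\<And>t. \<bar>t\<bar> ^ (k + j) * norm (g t) \<le> B" using rapid_bound[OF assms] by blast
  show "\<exists>B. \<forall>t. \<bar>t\<bar> ^ k * norm (of_real t ^ j * g t) \<le> B"
  proof (rule exI[of _ B], intro allI)
    fix t
    have "\<bar>t\<bar> ^ k * norm (of_real t ^ j * g t) = \<bar>t\<bar> ^ (k + j) * norm (g t)"
      by (simp add: norm_mult norm_power power_add ac_simps)
    then show "\<bar>t\<bar> ^ k * norm (of_real t ^ j * g t) \<le> B" using B[of t] by simp
  qed
qed

lemma rapid_cmult: assumes "rapid g" shows "rapid (\<lambda>t. c * g t)"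
  unfolding rapid_def
proof safe
  show "continuous_on UNIV (\<lambda>t. c * g t)"
    by (intro continuous_on_mult continuous_on_const rapid_cont[OF assms])
  fix k
  obtain B where B: "\<And>t. \<bar>t\<bar> ^ k * norm (g t) \<le> B" using rapid_bound[OF assms] by blast
  show "\<exists>B. \<forall>t. \<bar>t\<bar> ^ k * norm (c * g t) \<le> B"
  proof (rule exI[of _ "norm c * B"], intro allI)
    fix t
    have "norm c * (\<bar>t\<bar> ^ k * norm (g t)) \<le> norm c * B" by (rule mult_left_mono[OF B]) simp
    then show "\<bar>t\<bar> ^ k * norm (c * g t) \<le> norm c * B" by (simp add: norm_mult ac_simps)
  qed
qed

lemma rapid_add: assumes "rapid f" "rapid g" shows "rapid (\<lambda>t. f t + g t)"
  unfolding rapid_def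
proof safe
  show "continuous_on UNIV (\<lambda>t. f t + g t)"
    by (intro continuous_on_add rapid_cont[OF assms(1)] rapid_cont[OF assms(2)])
  fix k
  obtain A where A: "\<And>t. \<bar>t\<bar> ^ k * norm (f t) \<le> A" using rapid_bound[OF assms(1)] by blast
  obtain B where B: "\<And>t. \<bar>t\<bar> ^ k * norm (g t) \<le> B" using rapid_bound[OF assms(2)] by blast
  show "\<exists>B. \<forall>t. \<bar>t\<bar> ^ k * norm (f t + g t) \<le> B"
  proof (rule exI[of _ "A + B"], intro allI)
    fix t
    have "\<bar>t\<bar> ^ k * norm (f t + g t) \<le> \<bar>t\<bar> ^ k * (norm (f t) + norm (g t))"
      by (intro mult_left_mono norm_triangle_ineq) auto
    also have "\<dots> \<le> A + B" using A[of t] B[of t] by (simp add: distrib_left)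
    finally show "\<bar>t\<bar> ^ k * norm (f t + g t) \<le> A + B" .
  qed
qed

lemma rapid_cis: assumes "rapid g" "continuous_on UNIV h" shows "rapid (\<lambda>t. g t * cis (h t))"
  unfolding rapid_def
proof safe
  show "continuous_on UNIV (\<lambda>t. g t * cis (h t))"
    unfolding cis_conv_exp by (intro continuous_on_mult continuous_on_exp continuous_on_const continuous_on_of_real rapid_cont[OF assms(1)] assms(2))
  fix k
  show "\<exists>B. \<forall>t. \<bar>t\<bar> ^ k * norm (g t * cis (h t)) \<le> B"
    using rapid_bound[OF assms(1), of k] by (simp add: norm_mult)
qed

lemma rapid_tendsto_top: assumes "rapid g" shows "(g \<longlongrightarrow> 0) at_top"
proof -
  obtain B where B: "\<And>t. \<bar>t\<bar> ^ 1 * norm (g t) \<le> B" using rapid_bound[OF assms] by blast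
  have "((\<lambda>t::real. B / t) \<longlongrightarrow> 0) at_top"
    by (intro tendsto_divide_0[OF tendsto_const] filterlim_at_top_imp_at_infinity filterlim_ident)
  moreover have "eventually (\<lambda>t. norm (g t) \<le> B / t) at_top"
    using eventually_gt_at_top[of 0]
  proof eventually_elim
    case (elim t)
    have "norm (g t) * t \<le> B" using B[of t] elim by (simp add: mult.commute)
    then show ?case using elim by (subst pos_le_divide_eq) auto
  qed
  ultimately show ?thesis by (rule Lim_null_comparison[rotated])
qed

lemma rapid_tendsto_bot: assumes "rapid g" shows "(g \<longlongrightarrow> 0) at_bot"
proof -
  obtain B where B: "\<And>t. \<bar>t\<bar> ^ 1 * norm (g t) \<le> B" using rapid_bound[OF assms] by blast
  have "((\<lambda>t::real. B / (- t)) \<longlongrightarrow> 0) at_bot"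
    by (intro tendsto_divide_0[OF tendsto_const] filterlim_at_top_imp_at_infinity filterlim_uminus_at_top_at_bot)
  moreover have "eventually (\<lambda>t. norm (g t) \<le> B / (- t)) at_bot"
    using eventually_gt_at_bot[of 0]
  proof eventually_elim
    case (elim t)
    have "norm (g t) * (- t) \<le> B" using B[of t] elim by (simp add: mult.commute)
    then show ?case using elim by (subst pos_le_divide_eq) auto
  qed
  ultimately show ?thesis by (rule Lim_null_comparison[rotated])
qed

lemma cont_lin: "continuous_on UNIV (\<lambda>x::real. - 2 * pi * x * \<xi>)"
  by (intro continuous_on_mult continuous_on_const continuous_on_id)

lemma rapid_fourier_integrand: "rapid g \<Longrightarrow> rapid (\<lambda>x. g x * cis (- 2 * pi * x * \<xi>))"
  by (rule rapid_cis[OF _ cont_lin])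

lemma fourier_integrable: "rapid g \<Longrightarrow> integrable lborel (\<lambda>x. g x * cis (- 2 * pi * x * \<xi>))"
  by (rule rapid_integrable[OF rapid_fourier_integrand])

lemma norm_fourier_le: assumes "rapid g" shows "norm (fourier g \<xi>) \<le> (\<integral>x. norm (g x) \<partial>lborel)"
proof -
  have "norm (fourier g \<xi>) \<le> (\<integral>x. norm (g x * cis (- 2 * pi * x * \<xi>)) \<partial>lborel)"
    unfolding fourier_def by (rule integral_norm_bound)
  also have "\<dots> = (\<integral>x. norm (g x) \<partial>lborel)" by (simp add: norm_mult)
  finally show ?thesis .
qed

lemma cis_approx: "norm (cis a - 1 - \<i> * complex_of_real a) \<le> a^2 / 2"
proof -
  have "cmod (iexp a - (\<Sum>k \<le> 1. (\<i> * a)^k / fact k)) \<le> \<bar>a\<bar>^(Suc 1) / fact (Suc 1)"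
    by (rule iexp_approx1)
  then show ?thesis by (simp add: cis_conv_exp diff_diff_add power2_eq_square)
qed

lemma cis_lin_deriv:
  "((\<lambda>t. cis (- 2 * pi * t * \<xi>)) has_vector_derivative (\<i> * complex_of_real (- 2 * pi * \<xi>)) * cis (- 2 * pi * t * \<xi>)) (at t)"
proof -
  have 1: "((\<lambda>t::real. - 2 * pi * t * \<xi>) has_vector_derivative (- 2 * pi * \<xi>)) (at t)"
    unfolding has_real_derivative_iff_has_vector_derivative[symmetric]
    by (auto intro!: derivative_eq_intros)
  have 2: "(iexp has_vector_derivative \<i> * iexp (- 2 * pi * t * \<xi>)) (at (- 2 * pi * t * \<xi>))"
    by (rule has_vector_derivative_iexp)
  from vector_diff_chain_at[OF 1 2] show ?thesis
    by (simp add: o_def cis_conv_exp scaleR_conv_of_real ac_simps)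
qed

lemma fourier_deriv:
  assumes g: "rapid g"
  shows "(fourier g has_vector_derivative (- 2 * pi * \<i>) * fourier (\<lambda>t. of_real t * g t) \<xi>) (at \<xi>)"
proof -
  define g1 where "g1 = (\<lambda>t. of_real t * g t)"
  define g2 where "g2 = (\<lambda>t. of_real t ^ 2 * g t)"
  have r1: "rapid g1" using rapid_pow_mult[OF g, of 1] by (simp add: g1_def)
  have r2: "rapid g2" using rapid_pow_mult[OF g, of 2] by (simp add: g2_def)
  define D where "D = (- 2 * pi * \<i>) * fourier g1 \<xi>"
  define C where "C = 2 * pi^2 * (\<integral>t. norm (g2 t) \<partial>lborel)"
  have C0: "0 \<le> C" unfolding C_def by (intro mult_nonneg_nonneg integral_nonneg_AE) auto
  have est: "norm (fourier g (\<xi> + h) - fourier g \<xi> - h *\<^sub>R D) \<le> C * h^2" for h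
  proof -
    let ?e = "\<lambda>t. cis (- 2 * pi * t * \<xi>)"
    have i0: "integrable lborel (\<lambda>t. g t * ?e t)" by (rule fourier_integrable[OF g])
    have i1: "integrable lborel (\<lambda>t. g t * cis (- 2 * pi * t * (\<xi> + h)))" by (rule fourier_integrable[OF g])
    have i2: "integrable lborel (\<lambda>t. g1 t * ?e t)" by (rule fourier_integrable[OF r1])
    have i3: "integrable lborel (\<lambda>t. h *\<^sub>R ((- 2 * pi * \<i>) * (g1 t * ?e t)))"
      using i2 by simp
    have eq: "fourier g (\<xi> + h) - fourier g \<xi> - h *\<^sub>R D =
        (\<integral>t. g t * cis (- 2 * pi * t * (\<xi> + h)) - g t * ?e t - h *\<^sub>R ((- 2 * pi * \<i>) * (g1 t * ?e t)) \<partial>lborel)"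
      using i0 i1 i2 i3 by (simp add: fourier_def D_def)
    have pt: "norm (g t * cis (- 2 * pi * t * (\<xi> + h)) - g t * ?e t - h *\<^sub>R ((- 2 * pi * \<i>) * (g1 t * ?e t)))
        \<le> h^2 * (2 * pi^2) * norm (g2 t)" for t
    proof -
      let ?a = "- 2 * pi * t * h"
      have "g t * cis (- 2 * pi * t * (\<xi> + h)) - g t * ?e t - h *\<^sub>R ((- 2 * pi * \<i>) * (g1 t * ?e t))
          = g t * ?e t * (cis ?a - 1 - \<i> * complex_of_real ?a)"
      proof -
        have "?e t * cis ?a = cis (- 2 * pi * t * (\<xi> + h))"
          by (subst cis_mult) (simp add: algebra_simps)
        then show ?thesis
          by (simp add: g1_def algebra_simps scaleR_conv_of_real)
      qed
      then have "norm (g t * cis (- 2 * pi * t * (\<xi> + h)) - g t * ?e t - h *\<^sub>R ((- 2 * pi * \<i>) * (g1 t * ?e t)))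
          = norm (g t) * norm (cis ?a - 1 - \<i> * complex_of_real ?a)"
        by (simp add: norm_mult)
      also have "\<dots> \<le> norm (g t) * (?a^2 / 2)"
        by (intro mult_left_mono cis_approx) auto
      also have "\<dots> = h^2 * (2 * pi^2) * norm (g2 t)"
        by (simp add: g2_def norm_mult norm_power power_mult_distrib)
      finally show ?thesis .
    qed
    have "norm (fourier g (\<xi> + h) - fourier g \<xi> - h *\<^sub>R D) \<le>
        (\<integral>t. norm (g t * cis (- 2 * pi * t * (\<xi> + h)) - g t * ?e t - h *\<^sub>R ((- 2 * pi * \<i>) * (g1 t * ?e t))) \<partial>lborel)"
      unfolding eq by (rule integral_norm_bound)
    also have "\<dots> \<le> (\<integral>t. h^2 * (2 * pi^2) * norm (g2 t) \<partial>lborel)"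
      by (rule integral_mono') (use pt rapid_integrable[OF r2] in auto)
    also have "\<dots> = C * h^2" by (simp add: C_def)
    finally show ?thesis .
  qed
  have "(fourier g has_derivative (\<lambda>x. x *\<^sub>R D)) (at \<xi>)"
    unfolding has_derivative_at_alt
  proof (intro conjI allI impI)
    show "bounded_linear (\<lambda>x. x *\<^sub>R D)" by (rule bounded_linear_scaleR_left)
    fix e :: real assume e: "e > 0"
    show "\<exists>d>0. \<forall>y. norm (y - \<xi>) < d \<longrightarrow> norm (fourier g y - fourier g \<xi> - (y - \<xi>) *\<^sub>R D) \<le> e * norm (y - \<xi>)"
    proof (intro exI[of _ "e / (C + 1)"] conjI allI impI)
      show "0 < e / (C + 1)" using e C0 by simp
      fix y assume y: "norm (y - \<xi>) < e / (C + 1)"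
      have "norm (fourier g y - fourier g \<xi> - (y - \<xi>) *\<^sub>R D) \<le> C * (y - \<xi>)^2"
        using est[of "y - \<xi>"] by simp
      also have "\<dots> = (C * \<bar>y - \<xi>\<bar>) * \<bar>y - \<xi>\<bar>" by (simp add: power2_eq_square abs_mult_self)
      also have "\<dots> \<le> e * \<bar>y - \<xi>\<bar>"
      proof (rule mult_right_mono)
        have "C * \<bar>y - \<xi>\<bar> \<le> (C + 1) * \<bar>y - \<xi>\<bar>" using C0 by (simp add: algebra_simps)
        also have "\<dots> \<le> e" using y C0 by (simp add: field_simps)
        finally show "C * \<bar>y - \<xi>\<bar> \<le> e" .
      qed auto
      finally show "norm (fourier g y - fourier g \<xi> - (y - \<xi>) *\<^sub>R D) \<le> e * norm (y - \<xi>)" by simp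
    qed
  qed
  then show ?thesis unfolding has_vector_derivative_def D_def g1_def .
qed


lemma LBINT_UNIV: "(LBINT x=-\<infinity>..\<infinity>. f x) = (\<integral>x. f x \<partial>lborel)"
  by (simp add: interval_lebesgue_integral_def set_lebesgue_integral_def)

lemma fourier_ibp:
  assumes g: "rapid g" and g': "rapid g'" and D: "\<And>t. (g has_vector_derivative g' t) (at t)"
  shows "fourier g' \<xi> = (\<i> * complex_of_real (2 * pi * \<xi>)) * fourier g \<xi>"
proof -
  let ?e = "\<lambda>t. cis (- 2 * pi * t * \<xi>)"
  let ?c = "\<i> * complex_of_real (- 2 * pi * \<xi>)"
  define H where "H = (\<lambda>t. g t * ?e t)"
  define H' where "H' = (\<lambda>t. g' t * ?e t + ?c * (g t * ?e t))"
  have HD: "(H has_vector_derivative H' t) (at t)" for t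
    unfolding H_def H'_def
    using has_vector_derivative_mult[OF D[of t] cis_lin_deriv[of \<xi> t]] by (simp add: ac_simps)
  have rH': "rapid H'"
    unfolding H'_def
    by (intro rapid_add rapid_fourier_integrand rapid_cmult g g')
  have "(LBINT t=-\<infinity>..\<infinity>. H' t) = 0 - 0"
  proof (rule interval_integral_FTC_integrable)
    show "- \<infinity> < (\<infinity>::ereal)" by simp
    show "(H has_vector_derivative H' x) (at x)" for x by (rule HD)
    show "isCont H' x" for x using rapid_cont[OF rH'] by (simp add: continuous_on_eq_continuous_at)
    show "set_integrable lborel (einterval (- \<infinity>) \<infinity>) H'"
      using rapid_integrable[OF rH'] by (simp add: set_integrable_def)
    have nH: "(\<lambda>t. norm (H t)) = (\<lambda>t. norm (g t))" by (simp add: H_def norm_mult)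
    have "(H \<longlongrightarrow> 0) at_bot"
      using rapid_tendsto_bot[OF g] by (subst tendsto_norm_zero_iff[symmetric]) (simp add: nH tendsto_norm_zero_iff)
    then show "((H \<circ> real_of_ereal) \<longlongrightarrow> 0) (at_right (- \<infinity>))" by (simp add: ereal_tendsto_simps)
    have "(H \<longlongrightarrow> 0) at_top"
      using rapid_tendsto_top[OF g] by (subst tendsto_norm_zero_iff[symmetric]) (simp add: nH tendsto_norm_zero_iff)
    then show "((H \<circ> real_of_ereal) \<longlongrightarrow> 0) (at_left \<infinity>)" by (simp add: ereal_tendsto_simps)
  qed
  then have z: "(\<integral>t. H' t \<partial>lborel) = 0" by (simp add: LBINT_UNIV)
  have i1: "integrable lborel (\<lambda>t. g' t * ?e t)" by (rule fourier_integrable[OF g'])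
  have i2: "integrable lborel (\<lambda>t. ?c * (g t * ?e t))"
    by (rule integrable_mult_right) (rule fourier_integrable[OF g])
  have "(\<integral>t. H' t \<partial>lborel) = fourier g' \<xi> + ?c * fourier g \<xi>"
    unfolding H'_def fourier_def by (simp only: Bochner_Integration.integral_add[OF i1 i2] integral_mult_right_zero)
  with z show ?thesis by (simp add: algebra_simps eq_neg_iff_add_eq_0)
qed

definition mom :: "nat \<Rightarrow> (real \<Rightarrow> complex) \<Rightarrow> real \<Rightarrow> complex" where
  "mom k g = (\<lambda>t. of_real t ^ k * g t)"

lemma schwartz_D:
  assumes "schwartz \<phi>"
  obtains D where "D 0 = \<phi>" "\<And>m x. (D m has_vector_derivative D (Suc m) x) (at x)" "\<And>m. rapid (D m)"
proof -
  obtain D where D0: "D 0 = \<phi>" and DD: "\<And>m x. (D m has_vector_derivative D (Suc m) x) (at x)"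
    and DB: "\<And>k m. \<exists>B. \<forall>x. \<bar>x\<bar> ^ k * norm (D m x) \<le> B"
    using assms unfolding schwartz_def by blast
  have "rapid (D m)" for m
    unfolding rapid_def
  proof
    show "continuous_on UNIV (D m)"
      by (rule continuous_on_vector_derivative) (use DD has_vector_derivative_at_within in blast)
  qed (use DB in blast)
  with that D0 DD show ?thesis by blast
qed

lemma pow_vderiv: "((\<lambda>t. complex_of_real t ^ a) has_vector_derivative (of_nat a * of_real t ^ (a - 1))) (at t)"
proof -
  have "((\<lambda>t. complex_of_real (t ^ a)) has_vector_derivative of_real (real a * t ^ (a - 1))) (at t)"
    by (intro has_vector_derivative_of_real) (use DERIV_pow[of a t] in simp)
  then show ?thesis by simp
qed

lemma dpow:
  fixes f f' :: "real \<Rightarrow> complex"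
  assumes "\<And>x. (f has_vector_derivative f' x) (at x)"
  shows "((\<lambda>t. of_real t ^ a * f t) has_vector_derivative
           (of_nat a * (of_real t ^ (a - 1) * f t) + of_real t ^ a * f' t)) (at t)"
  using has_vector_derivative_mult[OF pow_vderiv[of a t] assms[of t]] by (simp add: algebra_simps)

lemma mom_Suc: "(\<lambda>t. of_real t * mom k g t) = mom (Suc k) g"
  by (simp add: mom_def mult.assoc)

lemma fourier_mom_deriv:
  assumes "rapid g"
  shows "(fourier (mom k g) has_vector_derivative (- 2 * pi * \<i>) * fourier (mom (Suc k) g) \<xi>) (at \<xi>)"
  using fourier_deriv[OF rapid_pow_mult[OF assms, of k], of \<xi>] by (simp add: mom_Suc[unfolded mom_def] mom_def)

lemma rapid_mom: "rapid g \<Longrightarrow> rapid (mom k g)"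
  unfolding mom_def by (rule rapid_pow_mult)

lemma fourier_mom_bound:
  assumes "rapid g" shows "\<exists>M\<ge>0. \<forall>\<xi>. norm (fourier (mom k g) \<xi>) \<le> M"
  using norm_fourier_le[OF rapid_mom[OF assms]]
  by (intro exI[of _ "\<integral>x. norm (mom k g x) \<partial>lborel"]) (auto intro: integral_nonneg_AE)

lemma fourier_mom_decay:
  assumes "schwartz \<phi>"
  shows "\<exists>M\<ge>0. \<forall>\<xi>. norm (fourier (mom k \<phi>) \<xi>) * \<xi>^2 \<le> M"
proof -
  obtain D where D0: "D 0 = \<phi>" and DD: "\<And>m x. (D m has_vector_derivative D (Suc m) x) (at x)"
    and rD: "\<And>m. rapid (D m)"
    using schwartz_D[OF assms] by blast
  define h1 where "h1 = (\<lambda>t. of_nat k * (of_real t ^ (k - 1) * D 0 t) + of_real t ^ k * D 1 t)"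
  define h2 where "h2 = (\<lambda>t. of_nat k * (of_nat (k - 1) * (of_real t ^ (k - 1 - 1) * D 0 t) + of_real t ^ (k - 1) * D 1 t)
       + (of_nat k * (of_real t ^ (k - 1) * D 1 t) + of_real t ^ k * D 2 t))"
  have g: "rapid (mom k \<phi>)" using rapid_mom[OF rD[of 0]] D0 by simp
  have r1: "rapid h1" unfolding h1_def
    by (intro rapid_add rapid_cmult rapid_pow_mult rD)
  have r2: "rapid h2" unfolding h2_def
    by (intro rapid_add rapid_cmult rapid_pow_mult rD)
  have d1: "(mom k \<phi> has_vector_derivative h1 t) (at t)" for t
    using dpow[OF DD[of 0], of k t] D0 by (simp add: mom_def h1_def)
  have DD01: "\<And>x. (D 0 has_vector_derivative D 1 x) (at x)" using DD[of 0] by simp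
  have DD12: "\<And>x. (D 1 has_vector_derivative D 2 x) (at x)" using DD[of 1] by (simp add: numeral_2_eq_2)
  have d2: "(h1 has_vector_derivative h2 t) (at t)" for t
    unfolding h1_def h2_def
    by (intro has_vector_derivative_add has_vector_derivative_mult_right dpow DD01 DD12)
  define M where "M = (\<integral>x. norm (h2 x) \<partial>lborel) / (4 * pi^2)"
  have M0: "0 \<le> M" unfolding M_def by (intro divide_nonneg_pos integral_nonneg_AE) auto
  show ?thesis
  proof (intro exI[of _ M] conjI allI M0)
    fix \<xi> :: real
    have e1: "fourier h1 \<xi> = (\<i> * complex_of_real (2 * pi * \<xi>)) * fourier (mom k \<phi>) \<xi>"
      by (rule fourier_ibp[OF g r1 d1])
    have e2: "fourier h2 \<xi> = (\<i> * complex_of_real (2 * pi * \<xi>)) * fourier h1 \<xi>"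
      by (rule fourier_ibp[OF r1 r2 d2])
    have "norm (fourier h2 \<xi>) = (4 * pi^2) * (norm (fourier (mom k \<phi>) \<xi>) * \<xi>^2)"
      unfolding e2 e1 by (simp add: norm_mult power2_eq_square abs_mult)
    then have "(4 * pi^2) * (norm (fourier (mom k \<phi>) \<xi>) * \<xi>^2) \<le> (\<integral>x. norm (h2 x) \<partial>lborel)"
      using norm_fourier_le[OF r2, of \<xi>] by simp
    then show "norm (fourier (mom k \<phi>) \<xi>) * \<xi>^2 \<le> M"
      unfolding M_def by (simp add: field_simps)
  qed
qed

definition E :: "complex \<Rightarrow> real \<Rightarrow> complex" where
  "E z \<xi> = exp (2 * pi * \<i> * z * complex_of_real \<xi>)"

lemma norm_E: "norm (E z \<xi>) = exp (- 2 * pi * Im z * \<xi>)"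
  by (simp add: E_def)

lemma E_deriv: "(E z has_vector_derivative (2 * pi * \<i> * z) * E z \<xi>) (at \<xi>)"
proof -
  have "((\<lambda>w. exp (2 * pi * \<i> * z * w)) has_field_derivative (2 * pi * \<i> * z) * exp (2 * pi * \<i> * z * of_real \<xi>)) (at (of_real \<xi>))"
    by (auto intro!: derivative_eq_intros)
  from has_vector_derivative_real_field[OF this] show ?thesis
    unfolding E_def by (simp add: ac_simps)
qed

lemma cont_E: "continuous_on UNIV (E z)"
  by (rule continuous_on_vector_derivative) (use E_deriv has_vector_derivative_at_within in blast)

lemma exp_tail:
  fixes a d :: real assumes apos: "a > 0"
  shows "set_integrable lborel {d<..} (\<lambda>\<xi>. exp (- a * \<xi>))"
    and "(LINT \<xi>:{d<..}|lborel. exp (- a * \<xi>)) = exp (- a * d) / a"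
proof -
  define F where "F = (\<lambda>\<xi>. - exp (- a * \<xi>) / a)"
  have D: "DERIV F x :> exp (- a * x)" for x
    unfolding F_def using apos by (auto intro!: derivative_eq_intros)
  have l1: "((F \<circ> real_of_ereal) \<longlongrightarrow> F d) (at_right (ereal d))"
    unfolding ereal_tendsto_simps F_def
    by (intro tendsto_intros continuous_on_tendsto_compose[OF _ tendsto_ident_at]) (use apos in auto)
  have "((\<lambda>\<xi>. - exp (- a * \<xi>) / a) \<longlongrightarrow> - 0 / a) at_top"
    using apos by (intro tendsto_intros filterlim_compose[OF exp_at_bot]
        filterlim_tendsto_neg_mult_at_bot[OF tendsto_const _ filterlim_ident]) auto
  then have l2: "((F \<circ> real_of_ereal) \<longlongrightarrow> 0) (at_left \<infinity>)"
    unfolding ereal_tendsto_simps F_def by simp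
  note FTC = interval_integral_FTC_nonneg[of "ereal d" \<infinity> F "\<lambda>x. exp (- a * x)" "F d" 0, OF _ D _ _ l1 l2]
  show "set_integrable lborel {d<..} (\<lambda>\<xi>. exp (- a * \<xi>))" using FTC(1) by simp
  have "(LBINT x=ereal d..\<infinity>. exp (- a * x)) = 0 - F d" using FTC(2) by simp
  then show "(LINT \<xi>:{d<..}|lborel. exp (- a * \<xi>)) = exp (- a * d) / a"
    by (simp add: interval_lebesgue_integral_def F_def)
qed

lemma inv_sq_tail:
  fixes d :: real assumes d: "d > 0"
  shows "set_integrable lborel {d<..} (\<lambda>\<xi>. 1 / \<xi>^2)"
    and "(LINT \<xi>:{d<..}|lborel. 1 / \<xi>^2) = 1 / d"
proof -
  define F where "F = (\<lambda>\<xi>::real. - 1 / \<xi>)"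
  have D: "ereal d < ereal x \<Longrightarrow> DERIV F x :> 1 / x^2" for x
    unfolding F_def using d by (auto intro!: derivative_eq_intros simp: power2_eq_square)
  have C: "ereal d < ereal x \<Longrightarrow> isCont (\<lambda>x. 1 / x^2) x" for x
    using d by (auto intro!: continuous_intros)
  have l1: "((F \<circ> real_of_ereal) \<longlongrightarrow> F d) (at_right (ereal d))"
    unfolding ereal_tendsto_simps F_def
    using d by (intro tendsto_intros tendsto_mono[OF at_le tendsto_ident_at]) auto
  have "((\<lambda>\<xi>::real. - 1 / \<xi>) \<longlongrightarrow> 0) at_top"
    by (intro tendsto_divide_0[OF tendsto_const] filterlim_at_top_imp_at_infinity filterlim_ident)
  then have l2: "((F \<circ> real_of_ereal) \<longlongrightarrow> 0) (at_left \<infinity>)"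
    unfolding ereal_tendsto_simps F_def .
  note FTC = interval_integral_FTC_nonneg[of "ereal d" \<infinity> F "\<lambda>x. 1 / x^2" "F d" 0, OF _ D C _ l1 l2]
  show "set_integrable lborel {d<..} (\<lambda>\<xi>. 1 / \<xi>^2)" using FTC(1) by simp
  have "(LBINT x=ereal d..\<infinity>. 1 / x^2) = 0 - F d" using FTC(2) by simp
  then show "(LINT \<xi>:{d<..}|lborel. 1 / \<xi>^2) = 1 / d"
    by (simp add: interval_lebesgue_integral_def F_def)
qed


lemma E_tail:
  assumes "Im z > 0"
  shows "set_integrable lborel {d<..} (\<lambda>\<xi>. exp (- 2 * pi * Im z * \<xi>))"
    and "(LINT \<xi>:{d<..}|lborel. exp (- 2 * pi * Im z * \<xi>)) = exp (- 2 * pi * Im z * d) / (2 * pi * Im z)"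
  using exp_tail[of "2 * pi * Im z" d] assms by simp_all

lemma bdd_E_integrable:
  assumes F: "continuous_on UNIV F" and M: "\<And>\<xi>. norm (F \<xi>) \<le> M" and z: "Im z > 0"
  shows "set_integrable lborel {d<..} (\<lambda>\<xi>. F \<xi> * E z \<xi>)"
proof (rule set_integrable_bound[where f="\<lambda>\<xi>. M * exp (- 2 * pi * Im z * \<xi>)"])
  show "set_integrable lborel {d<..} (\<lambda>\<xi>. M * exp (- 2 * pi * Im z * \<xi>))"
    using E_tail(1)[OF z, of d] by (intro set_integrable_mult_right) auto
  have [measurable]: "(\<lambda>\<xi>. F \<xi> * E z \<xi>) \<in> borel_measurable borel"
    by (intro borel_measurable_continuous_onI continuous_on_mult F cont_E)
  show "set_borel_measurable lborel {d<..} (\<lambda>\<xi>. F \<xi> * E z \<xi>)"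
    unfolding set_borel_measurable_def by measurable
  have M0: "0 \<le> M" using M[of 0] norm_ge_zero[of "F 0"] by linarith
  show "AE x in lborel. x \<in> {d<..} \<longrightarrow> norm (F x * E z x) \<le> norm (M * exp (- 2 * pi * Im z * x))"
    using M M0 by (auto simp: norm_mult norm_E intro!: mult_right_mono)
qed

lemma half_ibp:
  assumes FD: "\<And>\<xi>. (F has_vector_derivative F' \<xi>) (at \<xi>)" and F'c: "continuous_on UNIV F'"
    and M: "\<And>\<xi>. norm (F \<xi>) \<le> M" and M': "\<And>\<xi>. norm (F' \<xi>) \<le> M'"
    and F0: "F 0 = 0" and z: "Im z > 0"
  shows "(LINT \<xi>:{0<..}|lborel. F' \<xi> * E z \<xi>) = - (2 * pi * \<i> * z) * (LINT \<xi>:{0<..}|lborel. F \<xi> * E z \<xi>)"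
proof -
  let ?c = "2 * pi * \<i> * z"
  have Fc: "continuous_on UNIV F"
    by (rule continuous_on_vector_derivative) (use FD has_vector_derivative_at_within in blast)
  define H where "H = (\<lambda>\<xi>. F \<xi> * E z \<xi>)"
  define H' where "H' = (\<lambda>\<xi>. F' \<xi> * E z \<xi> + ?c * (F \<xi> * E z \<xi>))"
  have HD: "(H has_vector_derivative H' \<xi>) (at \<xi>)" for \<xi>
    unfolding H_def H'_def
    using has_vector_derivative_mult[OF FD[of \<xi>] E_deriv[of z \<xi>]] by (simp add: ac_simps)
  have i1: "set_integrable lborel {0<..} (\<lambda>\<xi>. F' \<xi> * E z \<xi>)"
    by (rule bdd_E_integrable[OF F'c M' z])
  have i2: "set_integrable lborel {0<..} (\<lambda>\<xi>. F \<xi> * E z \<xi>)"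
    by (rule bdd_E_integrable[OF Fc M z])
  have i2': "set_integrable lborel {0<..} (\<lambda>\<xi>. ?c * (F \<xi> * E z \<xi>))"
    using i2 by (rule set_integrable_mult_right)
  have "(LBINT \<xi>=ereal 0..\<infinity>. H' \<xi>) = 0 - 0"
  proof (rule interval_integral_FTC_integrable)
    show "ereal 0 < \<infinity>" by simp
    show "(H has_vector_derivative H' x) (at x)" for x by (rule HD)
    have "continuous_on UNIV H'" unfolding H'_def
      by (intro continuous_on_add continuous_on_mult continuous_on_const F'c Fc cont_E)
    then show "isCont H' x" for x by (simp add: continuous_on_eq_continuous_at)
    show "set_integrable lborel (einterval (ereal 0) \<infinity>) H'"
      unfolding H'_def einterval_eq_Ici by (rule set_integral_add(1)[OF i1 i2'])
    have "continuous_on UNIV H" unfolding H_def by (intro continuous_on_mult Fc cont_E)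
    then have "(H \<longlongrightarrow> H 0) (at 0)" by (simp add: continuous_on_eq_continuous_at isCont_def)
    then have "(H \<longlongrightarrow> 0) (at 0)" using F0 by (simp add: H_def)
    then have "(H \<longlongrightarrow> 0) (at_right 0)" by (rule tendsto_mono[OF at_le[OF subset_UNIV]])
    then show "((H \<circ> real_of_ereal) \<longlongrightarrow> 0) (at_right (ereal 0))" by (simp add: ereal_tendsto_simps)
    have M0: "0 \<le> M" using M[of 0] norm_ge_zero[of "F 0"] by linarith
    have "((\<lambda>\<xi>. M * exp (- (2 * pi * Im z) * \<xi>)) \<longlongrightarrow> M * 0) at_top"
      using z by (intro tendsto_intros filterlim_compose[OF exp_at_bot]
        filterlim_tendsto_neg_mult_at_bot[OF tendsto_const _ filterlim_ident]) auto
    then have "((\<lambda>\<xi>. M * exp (- (2 * pi * Im z) * \<xi>)) \<longlongrightarrow> 0) at_top" by simp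
    moreover have "eventually (\<lambda>\<xi>. norm (H \<xi>) \<le> M * exp (- (2 * pi * Im z) * \<xi>)) at_top"
      using M by (auto simp: H_def norm_mult norm_E intro!: always_eventually mult_right_mono)
    ultimately have "(H \<longlongrightarrow> 0) at_top" by (rule Lim_null_comparison[rotated])
    then show "((H \<circ> real_of_ereal) \<longlongrightarrow> 0) (at_left \<infinity>)" by (simp add: ereal_tendsto_simps)
  qed
  then have "(LINT \<xi>:{0<..}|lborel. H' \<xi>) = 0"
    by (simp add: interval_lebesgue_integral_def)
  moreover have "(LINT \<xi>:{0<..}|lborel. H' \<xi>) =
      (LINT \<xi>:{0<..}|lborel. F' \<xi> * E z \<xi>) + ?c * (LINT \<xi>:{0<..}|lborel. F \<xi> * E z \<xi>)"
    unfolding H'_def by (simp only: set_integral_add(2)[OF i1 i2'] set_integral_mult_right)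
  ultimately show ?thesis by (simp add: algebra_simps eq_neg_iff_add_eq_0)
qed

lemma mom0: "mom 0 g = g" by (simp add: mom_def)

lemma vanish_mom:
  assumes g: "rapid g" and v: "\<And>\<xi>. \<bar>\<xi>\<bar> < d \<Longrightarrow> fourier g \<xi> = 0"
  shows "\<bar>\<xi>\<bar> < d \<Longrightarrow> fourier (mom k g) \<xi> = 0"
proof (induction k arbitrary: \<xi>)
  case 0 then show ?case using v by (simp add: mom0)
next
  case (Suc k)
  have S: "open {-d<..<d}" "\<xi> \<in> {-d<..<d}" using Suc.prems by auto
  have "((\<lambda>_. 0) has_vector_derivative (- 2 * pi * \<i>) * fourier (mom (Suc k) g) \<xi>) (at \<xi>)"
    by (rule has_vector_derivative_transform_within_open[OF fourier_mom_deriv[OF g] S]) (use Suc.IH in auto)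
  moreover have "((\<lambda>_. 0::complex) has_vector_derivative 0) (at \<xi>)" by (rule has_vector_derivative_const)
  ultimately have "(- 2 * pi * \<i>) * fourier (mom (Suc k) g) \<xi> = 0" by (rule vector_derivative_unique_at)
  then show ?case by simp
qed

lemma cont_fourier_mom: "rapid g \<Longrightarrow> continuous_on UNIV (fourier (mom k g))"
  by (rule continuous_on_vector_derivative) (use fourier_mom_deriv has_vector_derivative_at_within in blast)

lemma vanish_endpoint:
  fixes F :: "real \<Rightarrow> complex" and d :: real
  assumes c: "continuous_on UNIV F" and v: "\<And>\<xi>. \<bar>\<xi>\<bar> < d \<Longrightarrow> F \<xi> = 0" and dpos: "d > 0"
  shows "F d = 0"
proof -
  have "(F \<longlongrightarrow> F d) (at_left d)"
    using c by (simp add: continuous_on_eq_continuous_at isCont_def tendsto_mono[OF at_le[OF subset_UNIV]])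
  moreover have "(F \<longlongrightarrow> 0) (at_left d)"
  proof (rule tendsto_eventually)
    have "eventually (\<lambda>x. x \<in> {0<..<d}) (at_left d)" by (rule eventually_at_left_real) (use dpos in simp)
    then show "eventually (\<lambda>x. F x = 0) (at_left d)"
      by eventually_elim (use v in auto)
  qed
  ultimately show ?thesis using tendsto_unique[OF trivial_limit_at_left_real] by blast
qed

lemma iterate_mom:
  assumes g: "rapid g" and v: "\<And>\<xi>. \<bar>\<xi>\<bar> < d \<Longrightarrow> fourier g \<xi> = 0" and dpos: "d > 0" and z: "Im z > 0"
  shows "(LINT \<xi>:{0<..}|lborel. fourier (mom k g) \<xi> * E z \<xi>) = z ^ k * (LINT \<xi>:{0<..}|lborel. fourier g \<xi> * E z \<xi>)"
proof (induction k)
  case 0 then show ?case by (simp add: mom0)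
next
  case (Suc k)
  obtain M where M: "\<And>\<xi>. norm (fourier (mom k g) \<xi>) \<le> M" using fourier_mom_bound[OF g, of k] by blast
  obtain M' where M': "\<And>\<xi>. norm (fourier (mom (Suc k) g) \<xi>) \<le> M'" using fourier_mom_bound[OF g, of "Suc k"] by blast
  have M'': "norm ((- 2 * pi * \<i>) * fourier (mom (Suc k) g) \<xi>) \<le> 2 * pi * M'" for \<xi>
    using M'[of \<xi>] by (simp add: norm_mult)
  have "(LINT \<xi>:{0<..}|lborel. (- 2 * pi * \<i>) * fourier (mom (Suc k) g) \<xi> * E z \<xi>) =
      - (2 * pi * \<i> * z) * (LINT \<xi>:{0<..}|lborel. fourier (mom k g) \<xi> * E z \<xi>)"
  proof -
    have c1: "continuous_on UNIV (\<lambda>x. (- 2 * pi * \<i>) * fourier (mom (Suc k) g) x)"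
      by (intro continuous_on_mult continuous_on_const cont_fourier_mom[OF g])
    have f0: "fourier (mom k g) 0 = 0" by (rule vanish_mom[of g d]) (use g v dpos in auto)
    show ?thesis by (rule half_ibp[OF fourier_mom_deriv[OF g] c1 M M'' f0 z])
  qed
  note A = this
  let ?X = "LINT \<xi>:{0<..}|lborel. fourier (mom (Suc k) g) \<xi> * E z \<xi>"
  let ?Y = "LINT \<xi>:{0<..}|lborel. fourier (mom k g) \<xi> * E z \<xi>"
  have eqL: "(LINT \<xi>:{0<..}|lborel. (- 2 * pi * \<i>) * fourier (mom (Suc k) g) \<xi> * E z \<xi>) = (- 2 * pi * \<i>) * ?X"
    by (simp only: mult.assoc set_integral_mult_right)
  have "(- 2 * pi * \<i>) * ?X = - (2 * pi * \<i> * z) * ?Y" using A unfolding eqL .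
  also have "\<dots> = (- 2 * pi * \<i>) * (z * ?Y)" by (simp add: algebra_simps)
  finally have "?X = z * ?Y" by (subst (asm) mult_cancel_left) simp
  then show ?case using Suc.IH by simp
qed

lemma tail_bound:
  fixes G :: "real \<Rightarrow> complex" and d :: real
  assumes Gc: "continuous_on UNIV G" and M: "\<And>\<xi>. norm (G \<xi>) \<le> M"
    and M': "\<And>\<xi>. norm (G \<xi>) * \<xi>^2 \<le> M'"
    and v: "\<And>\<xi>. 0 < \<xi> \<Longrightarrow> \<xi> \<le> d \<Longrightarrow> G \<xi> = 0"
    and dpos: "d > 0" and z: "Im z > 0"
  shows "norm (LINT \<xi>:{0<..}|lborel. G \<xi> * E z \<xi>) \<le> (M / (2 * pi) + M' / d) * exp (- 2 * pi * d * Im z) / sqrt (Im z)"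
proof -
  define y where "y = Im z"
  have y: "y > 0" using z by (simp add: y_def)
  define g where "g = (\<lambda>\<xi>. norm (G \<xi> * E z \<xi>))"
  have gn: "g \<xi> = norm (G \<xi>) * exp (- 2 * pi * y * \<xi>)" for \<xi>
    by (simp add: g_def norm_mult norm_E y_def)
  have M0: "0 \<le> M" using M[of 0] norm_ge_zero[of "G 0"] by linarith
  have M'0: "0 \<le> M'" using M'[of 0] by simp
  have i0: "set_integrable lborel {0<..} (\<lambda>\<xi>. G \<xi> * E z \<xi>)" by (rule bdd_E_integrable[OF Gc M z])
  have id: "set_integrable lborel {d<..} g"
    unfolding g_def by (rule set_integrable_norm[OF bdd_E_integrable[OF Gc M z]])
  have "norm (LINT \<xi>:{0<..}|lborel. G \<xi> * E z \<xi>) \<le> (LINT \<xi>:{0<..}|lborel. g \<xi>)"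
    unfolding g_def by (rule set_integral_norm_bound[OF i0])
  also have "(LINT \<xi>:{0<..}|lborel. g \<xi>) = (LINT \<xi>:{d<..}|lborel. g \<xi>)"
    unfolding set_lebesgue_integral_def
  proof (rule Bochner_Integration.integral_cong[OF refl])
    fix \<xi> :: real
    show "indicator {0<..} \<xi> *\<^sub>R g \<xi> = indicator {d<..} \<xi> *\<^sub>R g \<xi>"
      using v[of \<xi>] dpos by (cases "\<xi> \<le> 0"; cases "\<xi> \<le> d") (auto simp: g_def indicator_def)
  qed
  also have "(LINT \<xi>:{d<..}|lborel. g \<xi>) \<le> (M / (2 * pi) + M' / d) * exp (- 2 * pi * d * y) / sqrt y"
  proof (cases "y \<ge> 1")
    case True
    have "(LINT \<xi>:{d<..}|lborel. g \<xi>) \<le> (LINT \<xi>:{d<..}|lborel. M * exp (- 2 * pi * Im z * \<xi>))"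
    proof (rule set_integral_mono[OF id])
      show "set_integrable lborel {d<..} (\<lambda>\<xi>. M * exp (- 2 * pi * Im z * \<xi>))"
        using E_tail(1)[OF z, of d] by (intro set_integrable_mult_right) auto
      show "g \<xi> \<le> M * exp (- 2 * pi * Im z * \<xi>)" for \<xi>
        unfolding gn y_def using M[of \<xi>] by (intro mult_right_mono) auto
    qed
    also have "\<dots> = M * (exp (- 2 * pi * y * d) / (2 * pi * y))"
      using E_tail(2)[OF z, of d] by (simp add: y_def)
    also have "\<dots> \<le> M / (2 * pi) * exp (- 2 * pi * d * y) / sqrt y"
    proof -
      have s1: "1 \<le> sqrt y" using True by simp
      have "sqrt y * 1 \<le> sqrt y * sqrt y" using s1 by (intro mult_left_mono) auto
      then have "sqrt y \<le> y" using y by simp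
      then have "1 / y \<le> 1 / sqrt y" using y by (intro divide_left_mono) auto
      then have "M / (2 * pi) * exp (- 2 * pi * d * y) * (1 / y) \<le> M / (2 * pi) * exp (- 2 * pi * d * y) * (1 / sqrt y)"
        using M0 by (intro mult_left_mono) auto
      then show ?thesis by (simp add: ac_simps)
    qed
    also have "\<dots> \<le> (M / (2 * pi) + M' / d) * exp (- 2 * pi * d * y) / sqrt y"
      using M'0 dpos y by (intro divide_right_mono mult_right_mono) auto
    finally show ?thesis .
  next
    case False
    have si: "set_integrable lborel {d<..} (\<lambda>\<xi>. M' * exp (- 2 * pi * y * d) * (1 / \<xi>^2))"
      using inv_sq_tail(1)[OF dpos] by (intro set_integrable_mult_right) auto
    have "(LINT \<xi>:{d<..}|lborel. g \<xi>) \<le> (LINT \<xi>:{d<..}|lborel. M' * exp (- 2 * pi * y * d) * (1 / \<xi>^2))"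
    proof (rule set_integral_mono[OF id si])
      fix \<xi> :: real assume "\<xi> \<in> {d<..}"
      then have \<xi>: "\<xi> > d" by simp
      have "norm (G \<xi>) \<le> M' / \<xi>^2" using M'[of \<xi>] \<xi> dpos by (simp add: field_simps)
      moreover have "exp (- 2 * pi * y * \<xi>) \<le> exp (- 2 * pi * y * d)"
        using \<xi> y by (simp add: mult_left_mono)
      ultimately have "norm (G \<xi>) * exp (- 2 * pi * y * \<xi>) \<le> M' / \<xi>^2 * exp (- 2 * pi * y * d)"
        by (intro mult_mono) (use M'0 in auto)
      then show "g \<xi> \<le> M' * exp (- 2 * pi * y * d) * (1 / \<xi>^2)" unfolding gn by simp
    qed
    also have "\<dots> = M' * exp (- 2 * pi * y * d) * (1 / d)"
      using inv_sq_tail(2)[OF dpos] by (simp only: set_integral_mult_right)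
    also have "\<dots> \<le> M' / d * exp (- 2 * pi * d * y) / sqrt y"
    proof -
      have "sqrt y \<le> 1" using False by simp
      then have "1 \<le> 1 / sqrt y" using y by (simp add: field_simps)
      then have "M' / d * exp (- 2 * pi * d * y) * 1 \<le> M' / d * exp (- 2 * pi * d * y) * (1 / sqrt y)"
        using M'0 dpos by (intro mult_left_mono) auto
      then show ?thesis by (simp add: ac_simps)
    qed
    also have "\<dots> \<le> (M / (2 * pi) + M' / d) * exp (- 2 * pi * d * y) / sqrt y"
      using M0 dpos y by (intro divide_right_mono mult_right_mono) auto
    finally show ?thesis .
  qed
  finally show ?thesis by (simp add: y_def)
qed

lemma E_int:
  assumes z: "Im z > 0"
  shows "(LINT \<xi>:{0<..}|lborel. E z \<xi>) = - 1 / (2 * pi * \<i> * z)"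
    and "set_integrable lborel {0<..} (E z)"
proof -
  let ?c = "2 * pi * \<i> * z"
  have c0: "?c \<noteq> 0" using z by auto
  have i: "set_integrable lborel {0<..} (\<lambda>\<xi>. 1 * E z \<xi>)"
    by (rule bdd_E_integrable[of "\<lambda>_. 1" 1]) (use z in auto)
  then show "set_integrable lborel {0<..} (E z)" by simp
  define F where "F = (\<lambda>\<xi>. E z \<xi> / ?c)"
  have "(LBINT \<xi>=ereal 0..\<infinity>. E z \<xi>) = 0 - F 0"
  proof (rule interval_integral_FTC_integrable)
    show "ereal 0 < \<infinity>" by simp
    show "(F has_vector_derivative E z x) (at x)" for x
      unfolding F_def using has_vector_derivative_divide[OF E_deriv[of z x], of ?c] c0 by simp
    show "isCont (E z) x" for x using cont_E[of z] by (simp add: continuous_on_eq_continuous_at)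
    show "set_integrable lborel (einterval (ereal 0) \<infinity>) (E z)" using i by simp
    have "continuous_on UNIV F" unfolding F_def by (intro continuous_on_divide continuous_on_const cont_E) (use c0 in auto)
    then have "(F \<longlongrightarrow> F 0) (at 0)" by (simp add: continuous_on_eq_continuous_at isCont_def)
    then have "(F \<longlongrightarrow> F 0) (at_right 0)" by (rule tendsto_mono[OF at_le[OF subset_UNIV]])
    then show "((F \<circ> real_of_ereal) \<longlongrightarrow> F 0) (at_right (ereal 0))" by (simp add: ereal_tendsto_simps)
    have "((\<lambda>\<xi>. exp (- (2 * pi * Im z) * \<xi>) / cmod ?c) \<longlongrightarrow> 0 / cmod ?c) at_top"
      using z by (intro tendsto_intros filterlim_compose[OF exp_at_bot]
        filterlim_tendsto_neg_mult_at_bot[OF tendsto_const _ filterlim_ident]) auto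
    then have "((\<lambda>\<xi>. norm (F \<xi>)) \<longlongrightarrow> 0) at_top" by (simp add: F_def norm_divide norm_E)
    then have "(F \<longlongrightarrow> 0) at_top" by (simp only: tendsto_norm_zero_iff)
    then show "((F \<circ> real_of_ereal) \<longlongrightarrow> 0) (at_left \<infinity>)" by (simp add: ereal_tendsto_simps)
  qed
  moreover have "F 0 = 1 / ?c" by (simp add: F_def E_def)
  ultimately show "(LINT \<xi>:{0<..}|lborel. E z \<xi>) = - 1 / ?c"
    by (simp add: interval_lebesgue_integral_def)
qed

lemma frac_aux: fixes a z1 z2 :: complex assumes "a \<noteq> 0" "z1 \<noteq> 0" "z2 \<noteq> 0"
  shows "- 1 / (a * z1) + - 1 / (a * z2) = - (z1 + z2) / (a * (z1 * z2))"
  using assms by (simp add: field_simps)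

lemma frac_aux2: fixes y s :: real assumes "s > 0"
  shows "- (2 * \<i> * complex_of_real y) / (2 * pi * \<i> * - complex_of_real s) = of_real (y / (pi * s))"
proof -
  have "- (2 * \<i> * complex_of_real y) / (2 * pi * \<i> * - complex_of_real s) = (2 * \<i>) * of_real y / ((2 * \<i>) * (of_real (pi * s)))"
    by (simp add: ac_simps)
  also have "\<dots> = of_real y / of_real (pi * s)" by (rule mult_divide_mult_cancel_left) simp
  finally show ?thesis by simp
qed

lemma poisson_int:
  assumes y: "y > 0"
  shows "complex_of_real (poisson_kernel y u) = (LINT \<xi>:{0<..}|lborel. E (Complex u y) \<xi> + E (Complex (- u) y) \<xi>)"
proof -
  define z1 where "z1 = Complex u y"
  define z2 where "z2 = Complex (- u) y"
  have i1: "Im z1 > 0" and i2: "Im z2 > 0" using y by (auto simp: z1_def z2_def)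
  have nz: "z1 \<noteq> 0" "z2 \<noteq> 0" using i1 i2 by auto
  have "(LINT \<xi>:{0<..}|lborel. E z1 \<xi> + E z2 \<xi>) = - 1 / (2 * pi * \<i> * z1) + - 1 / (2 * pi * \<i> * z2)"
    by (simp add: set_integral_add(2)[OF E_int(2)[OF i1] E_int(2)[OF i2]] E_int(1)[OF i1] E_int(1)[OF i2])
  also have "\<dots> = - (z1 + z2) / (2 * pi * \<i> * (z1 * z2))"
    using nz by (subst frac_aux) auto
  also have "z1 + z2 = 2 * \<i> * of_real y" by (simp add: z1_def z2_def complex_eq_iff)
  also have "z1 * z2 = - of_real (u^2 + y^2)" by (simp add: z1_def z2_def complex_eq_iff power2_eq_square)
  also have "- (2 * \<i> * complex_of_real y) / (2 * pi * \<i> * - complex_of_real (u\<^sup>2 + y\<^sup>2)) = of_real (y / (pi * (u^2 + y^2)))"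
    by (rule frac_aux2) (use y in \<open>simp add: add_nonneg_pos\<close>)
  finally show ?thesis unfolding z1_def z2_def poisson_kernel_def by (simp add: add.commute)
qed

lemma E_shift: "E (z + complex_of_real r) \<xi> = cis (2 * pi * r * \<xi>) * E z \<xi>"
proof -
  have "2 * pi * \<i> * (z + complex_of_real r) * complex_of_real \<xi> =
        \<i> * complex_of_real (2 * pi * r * \<xi>) + 2 * pi * \<i> * z * complex_of_real \<xi>"
    by (simp add: algebra_simps)
  then show ?thesis by (simp add: E_def cis_conv_exp exp_add)
qed

lemma fubini_E:
  assumes \<phi>: "rapid \<phi>" and z: "Im z > 0"
  shows "integrable lborel (\<lambda>s. \<phi> s * (LINT \<xi>:{0<..}|lborel. cis (c * s * \<xi>) * E z \<xi>))"
    and "(\<integral>s. \<phi> s * (LINT \<xi>:{0<..}|lborel. cis (c * s * \<xi>) * E z \<xi>) \<partial>lborel) =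
         (LINT \<xi>:{0<..}|lborel. (\<integral>s. \<phi> s * cis (c * s * \<xi>) \<partial>lborel) * E z \<xi>)"
proof -
  define f where "f = (\<lambda>s \<xi>. indicator {0<..} \<xi> *\<^sub>R (\<phi> s * cis (c * s * \<xi>) * E z \<xi>))"
  define K where "K = (LINT \<xi>:{0<..}|lborel. exp (- 2 * pi * Im z * \<xi>))"
  have \<phi>c: "continuous_on UNIV \<phi>" by (rule rapid_cont[OF \<phi>])
  have hc: "continuous_on UNIV (\<lambda>p::real \<times> real. \<phi> (fst p) * cis (c * fst p * snd p) * E z (snd p))"
  proof (intro continuous_on_mult)
    show "continuous_on UNIV (\<lambda>p::real \<times> real. \<phi> (fst p))"
      by (rule continuous_on_compose2[OF \<phi>c continuous_on_fst]) auto
    show "continuous_on UNIV (\<lambda>p::real \<times> real. cis (c * fst p * snd p))"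
      unfolding cis_conv_exp by (intro continuous_intros)
    show "continuous_on UNIV (\<lambda>p::real \<times> real. E z (snd p))"
      by (rule continuous_on_compose2[OF cont_E continuous_on_snd]) auto
  qed
  have hm: "(\<lambda>p::real \<times> real. \<phi> (fst p) * cis (c * fst p * snd p) * E z (snd p)) \<in> borel_measurable borel"
    by (rule borel_measurable_continuous_onI[OF hc])
  have hm'[measurable]: "(\<lambda>p::real \<times> real. \<phi> (fst p) * cis (c * fst p * snd p) * E z (snd p)) \<in> borel_measurable (lborel \<Otimes>\<^sub>M lborel)"
    unfolding lborel_prod measurable_lborel2 by (rule hm)
  have fm: "case_prod f \<in> borel_measurable (lborel \<Otimes>\<^sub>M lborel)"
    unfolding f_def case_prod_beta by measurable
  have iK: "set_integrable lborel {0<..} (\<lambda>\<xi>. exp (- 2 * pi * Im z * \<xi>))" by (rule E_tail(1)[OF z])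
  have nf: "(\<integral>\<xi>. norm (f s \<xi>) \<partial>lborel) = norm (\<phi> s) * K" for s
  proof -
    have "(\<lambda>\<xi>. norm (f s \<xi>)) = (\<lambda>\<xi>. norm (\<phi> s) * (indicator {0<..} \<xi> *\<^sub>R exp (- 2 * pi * Im z * \<xi>)))"
      by (auto simp: f_def norm_mult norm_E indicator_def)
    then show ?thesis by (simp add: K_def set_lebesgue_integral_def)
  qed
  have int: "integrable (lborel \<Otimes>\<^sub>M lborel) (case_prod f)"
  proof (rule lborel_pair.Fubini_integrable[OF fm])
    show "integrable lborel (\<lambda>s. \<integral>\<xi>. norm (case_prod f (s, \<xi>)) \<partial>lborel)"
      using integrable_mult_left[OF integrable_norm[OF rapid_integrable[OF \<phi>]], of K] by (simp add: nf ac_simps)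
    show "AE s in lborel. integrable lborel (\<lambda>\<xi>. case_prod f (s, \<xi>))"
    proof (rule AE_I2)
      fix s
      have "set_integrable lborel {0<..} (\<lambda>\<xi>. (\<phi> s * cis (c * s * \<xi>)) * E z \<xi>)"
        by (rule bdd_E_integrable[where M="norm (\<phi> s)"])
           (auto simp: norm_mult z intro!: continuous_on_mult continuous_on_const
             continuous_on_compose2[OF continuous_on_cis] continuous_on_id)
      then show "integrable lborel (\<lambda>\<xi>. case_prod f (s, \<xi>))"
        by (simp add: f_def set_integrable_def)
    qed
  qed
  have in\<xi>: "(\<integral>\<xi>. f s \<xi> \<partial>lborel) = \<phi> s * (LINT \<xi>:{0<..}|lborel. cis (c * s * \<xi>) * E z \<xi>)" for s
  proof -
    have "(\<integral>\<xi>. f s \<xi> \<partial>lborel) = (\<integral>\<xi>. \<phi> s * (indicator {0<..} \<xi> *\<^sub>R (cis (c * s * \<xi>) * E z \<xi>)) \<partial>lborel)"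
      by (rule Bochner_Integration.integral_cong) (auto simp: f_def indicator_def ac_simps)
    then show ?thesis by (simp only: integral_mult_right_zero set_lebesgue_integral_def)
  qed
  have ins: "(\<integral>s. f s \<xi> \<partial>lborel) = indicator {0<..} \<xi> *\<^sub>R ((\<integral>s. \<phi> s * cis (c * s * \<xi>) \<partial>lborel) * E z \<xi>)" for \<xi>
    by (simp add: f_def)
  show "integrable lborel (\<lambda>s. \<phi> s * (LINT \<xi>:{0<..}|lborel. cis (c * s * \<xi>) * E z \<xi>))"
    using lborel_pair.integrable_fst'[OF int] by (simp add: in\<xi>)
  have "(\<integral>\<xi>. (\<integral>s. f s \<xi> \<partial>lborel) \<partial>lborel) = (\<integral>s. (\<integral>\<xi>. f s \<xi> \<partial>lborel) \<partial>lborel)"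
    by (rule lborel_pair.Fubini_integral[OF int])
  then show "(\<integral>s. \<phi> s * (LINT \<xi>:{0<..}|lborel. cis (c * s * \<xi>) * E z \<xi>) \<partial>lborel) =
         (LINT \<xi>:{0<..}|lborel. (\<integral>s. \<phi> s * cis (c * s * \<xi>) \<partial>lborel) * E z \<xi>)"
    by (simp add: in\<xi> ins set_lebesgue_integral_def)
qed


lemma fourier_reflect: "fourier (\<lambda>t. \<phi> (- t)) \<xi> = (\<integral>s. \<phi> s * cis (2 * pi * s * \<xi>) \<partial>lborel)"
  unfolding fourier_def
  by (subst lborel_integral_real_affine[where c="-1" and t=0]) simp_all

lemma conv_eq:
  assumes \<phi>: "rapid \<phi>" and y: "y > 0"
  shows "conv \<phi> (\<lambda>t. complex_of_real (poisson_kernel y t)) x =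
     (LINT \<xi>:{0<..}|lborel. fourier \<phi> \<xi> * E (Complex x y) \<xi>) +
     (LINT \<xi>:{0<..}|lborel. fourier (\<lambda>t. \<phi> (- t)) \<xi> * E (Complex (- x) y) \<xi>)"
proof -
  define z where "z = Complex x y"
  define w where "w = Complex (- x) y"
  have z: "Im z > 0" and w: "Im w > 0" using y by (auto simp: z_def w_def)
  define L1 where "L1 = (\<lambda>s. LINT \<xi>:{0<..}|lborel. cis ((- 2 * pi) * s * \<xi>) * E z \<xi>)"
  define L2 where "L2 = (\<lambda>s. LINT \<xi>:{0<..}|lborel. cis ((2 * pi) * s * \<xi>) * E w \<xi>)"
  have ci: "set_integrable lborel {0<..} (\<lambda>\<xi>. cis (c * s * \<xi>) * E v \<xi>)" if "Im v > 0" for c s v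
    by (rule bdd_E_integrable[where M=1])
       (auto simp: that intro!: continuous_on_compose2[OF continuous_on_cis] continuous_on_mult continuous_on_const continuous_on_id)
  have step1: "conv \<phi> (\<lambda>t. complex_of_real (poisson_kernel y t)) x = (\<integral>s. \<phi> s * complex_of_real (poisson_kernel y (x - s)) \<partial>lborel)"
    unfolding conv_def by (subst lborel_integral_real_affine[where c="-1" and t=x]) simp_all
  have step2: "complex_of_real (poisson_kernel y (x - s)) = L1 s + L2 s" for s
  proof -
    have e: "E (Complex (x - s) y) \<xi> + E (Complex (- (x - s)) y) \<xi> = cis ((- 2 * pi) * s * \<xi>) * E z \<xi> + cis ((2 * pi) * s * \<xi>) * E w \<xi>" for \<xi>
    proof -
      have h1: "Complex (x - s) y = z + complex_of_real (- s)" and h2: "Complex (- (x - s)) y = w + complex_of_real s"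
        by (simp_all add: z_def w_def complex_eq_iff)
      have a: "E (Complex (x - s) y) \<xi> = cis (2 * pi * (- s) * \<xi>) * E z \<xi>" unfolding h1 by (rule E_shift)
      have b: "E (Complex (- (x - s)) y) \<xi> = cis (2 * pi * s * \<xi>) * E w \<xi>" unfolding h2 by (rule E_shift)
      show ?thesis unfolding a b by simp
    qed
    have "complex_of_real (poisson_kernel y (x - s)) = (LINT \<xi>:{0<..}|lborel. cis ((- 2 * pi) * s * \<xi>) * E z \<xi> + cis ((2 * pi) * s * \<xi>) * E w \<xi>)"
      unfolding poisson_int[OF y] e ..
    also have "\<dots> = L1 s + L2 s"
      unfolding L1_def L2_def by (rule set_integral_add(2)[OF ci[OF z] ci[OF w]])
    finally show ?thesis .
  qed
  have i1: "integrable lborel (\<lambda>s. \<phi> s * L1 s)" unfolding L1_def by (rule fubini_E(1)[OF \<phi> z])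
  have i2: "integrable lborel (\<lambda>s. \<phi> s * L2 s)" unfolding L2_def by (rule fubini_E(1)[OF \<phi> w])
  have "(\<integral>s. \<phi> s * complex_of_real (poisson_kernel y (x - s)) \<partial>lborel) = (\<integral>s. \<phi> s * L1 s + \<phi> s * L2 s \<partial>lborel)"
    by (simp add: step2 distrib_left)
  also have "\<dots> = (\<integral>s. \<phi> s * L1 s \<partial>lborel) + (\<integral>s. \<phi> s * L2 s \<partial>lborel)"
    by (rule Bochner_Integration.integral_add[OF i1 i2])
  also have "(\<integral>s. \<phi> s * L1 s \<partial>lborel) = (LINT \<xi>:{0<..}|lborel. fourier \<phi> \<xi> * E z \<xi>)"
    unfolding L1_def fubini_E(2)[OF \<phi> z] fourier_def ..
  also have "(\<integral>s. \<phi> s * L2 s \<partial>lborel) = (LINT \<xi>:{0<..}|lborel. fourier (\<lambda>t. \<phi> (- t)) \<xi> * E w \<xi>)"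
    unfolding L2_def fubini_E(2)[OF \<phi> w] fourier_reflect ..
  finally show ?thesis using step1 by (simp add: z_def w_def)
qed

lemma schwartz_reflect:
  assumes "schwartz \<phi>" shows "schwartz (\<lambda>t. \<phi> (- t))"
proof -
  obtain D where D0: "D 0 = \<phi>" and DD: "\<And>m x. (D m has_vector_derivative D (Suc m) x) (at x)"
    and DB: "\<And>k m. \<exists>B. \<forall>x. \<bar>x\<bar> ^ k * norm (D m x) \<le> B"
    using assms unfolding schwartz_def by blast
  define D' where "D' = (\<lambda>m t. (- 1) ^ m * D m (- t))"
  have "D' 0 = (\<lambda>t. \<phi> (- t))" by (simp add: D'_def D0)
  moreover have "(D' m has_vector_derivative D' (Suc m) x) (at x)" for m x
  proof -
    have u: "((\<lambda>t::real. - t) has_vector_derivative (- 1)) (at x)"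
      unfolding has_real_derivative_iff_has_vector_derivative[symmetric] by (auto intro!: derivative_eq_intros)
    have "((D m \<circ> uminus) has_vector_derivative ((- 1) *\<^sub>R D (Suc m) (- x))) (at x)"
      by (rule vector_diff_chain_at[OF u]) (simp add: DD)
    then have "((\<lambda>t. (- 1) ^ m * D m (- t)) has_vector_derivative (- 1) ^ m * ((- 1) *\<^sub>R D (Suc m) (- x))) (at x)"
      by (intro has_vector_derivative_mult_right) (simp add: o_def)
    then show ?thesis by (simp add: D'_def)
  qed
  moreover have "\<exists>B. \<forall>x. \<bar>x\<bar> ^ k * norm (D' m x) \<le> B" for k m
  proof -
    obtain B where B: "\<And>x. \<bar>x\<bar> ^ k * norm (D m x) \<le> B" using DB by blast
    show ?thesis by (rule exI[of _ B]) (use B[of "- _"] in \<open>simp add: D'_def norm_mult norm_power\<close>)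
  qed
  ultimately show ?thesis unfolding schwartz_def by blast
qed

lemma schwartz_rapid: "schwartz \<phi> \<Longrightarrow> rapid \<phi>"
  by (metis schwartz_D)

lemma fourier_reflect2: "fourier (\<lambda>t. \<phi> (- t)) \<xi> = fourier \<phi> (- \<xi>)"
  unfolding fourier_reflect fourier_def by simp

lemma halfline_bound:
  assumes \<psi>: "schwartz \<psi>" and v: "\<And>\<xi>. \<bar>\<xi>\<bar> < d \<Longrightarrow> fourier \<psi> \<xi> = 0" and dpos: "d > 0"
  shows "\<exists>K\<ge>0. \<forall>z. Im z > 0 \<longrightarrow>
     norm (z ^ k * (LINT \<xi>:{0<..}|lborel. fourier \<psi> \<xi> * E z \<xi>)) \<le> K * exp (- 2 * pi * d * Im z) / sqrt (Im z)"
proof -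
  have r: "rapid \<psi>" by (rule schwartz_rapid[OF \<psi>])
  obtain M where M0: "M \<ge> 0" and M: "\<And>\<xi>. norm (fourier (mom k \<psi>) \<xi>) \<le> M"
    using fourier_mom_bound[OF r, of k] by blast
  obtain M' where M'0: "M' \<ge> 0" and M': "\<And>\<xi>. norm (fourier (mom k \<psi>) \<xi>) * \<xi>^2 \<le> M'"
    using fourier_mom_decay[OF \<psi>, of k] by blast
  have vv: "fourier (mom k \<psi>) \<xi> = 0" if "0 < \<xi>" "\<xi> \<le> d" for \<xi>
  proof (cases "\<xi> < d")
    case True then show ?thesis using that by (intro vanish_mom[of \<psi> d]) (use r v in auto)
  next
    case False
    then have "\<xi> = d" using that by simp
    moreover have "fourier (mom k \<psi>) d = 0"
      by (rule vanish_endpoint[OF cont_fourier_mom[OF r]]) (use r v dpos vanish_mom[of \<psi> d] in auto)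
    ultimately show ?thesis by simp
  qed
  show ?thesis
  proof (intro exI[of _ "M / (2 * pi) + M' / d"] conjI allI impI)
    show "0 \<le> M / (2 * pi) + M' / d" using M0 M'0 dpos by simp
    fix z :: complex assume z: "Im z > 0"
    have "z ^ k * (LINT \<xi>:{0<..}|lborel. fourier \<psi> \<xi> * E z \<xi>) = (LINT \<xi>:{0<..}|lborel. fourier (mom k \<psi>) \<xi> * E z \<xi>)"
      by (rule iterate_mom[OF r v dpos z, symmetric])
    also have "norm \<dots> \<le> (M / (2 * pi) + M' / d) * exp (- 2 * pi * d * Im z) / sqrt (Im z)"
      by (rule tail_bound[OF cont_fourier_mom[OF r] M M' vv dpos z])
    finally show "norm (z ^ k * (LINT \<xi>:{0<..}|lborel. fourier \<psi> \<xi> * E z \<xi>)) \<le> (M / (2 * pi) + M' / d) * exp (- 2 * pi * d * Im z) / sqrt (Im z)" .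
  qed
qed

lemma poly_bound:
  fixes p :: "complex poly"
  shows "\<exists>C>0. \<forall>x::real. norm (poly p (complex_of_real x)) \<le> C * (1 + \<bar>x\<bar> ^ degree p)"
proof -
  define C where "C = (\<Sum>i\<le>degree p. norm (coeff p i)) + 1"
  have C0: "C > 0" unfolding C_def by (simp add: add_nonneg_pos sum_nonneg)
  show ?thesis
  proof (intro exI[of _ C] conjI allI C0)
    fix x :: real
    have pw: "\<bar>x\<bar> ^ i \<le> 1 + \<bar>x\<bar> ^ degree p" if "i \<le> degree p" for i
    proof (cases "\<bar>x\<bar> \<le> 1")
      case True
      then have "\<bar>x\<bar> ^ i \<le> 1" by (simp add: power_le_one)
      then show ?thesis by (simp add: add_increasing2)
    next
      case False
      then have "\<bar>x\<bar> ^ i \<le> \<bar>x\<bar> ^ degree p" using that by (intro power_increasing) auto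
      then show ?thesis by simp
    qed
    have "norm (poly p (complex_of_real x)) = norm (\<Sum>i\<le>degree p. coeff p i * complex_of_real x ^ i)"
      by (simp add: poly_altdef)
    also have "\<dots> \<le> (\<Sum>i\<le>degree p. norm (coeff p i * complex_of_real x ^ i))"
      by (rule norm_sum)
    also have "\<dots> = (\<Sum>i\<le>degree p. norm (coeff p i) * \<bar>x\<bar> ^ i)"
      by (simp add: norm_mult norm_power)
    also have "\<dots> \<le> (\<Sum>i\<le>degree p. norm (coeff p i) * (1 + \<bar>x\<bar> ^ degree p))"
      by (intro sum_mono mult_left_mono pw) auto
    also have "\<dots> = (\<Sum>i\<le>degree p. norm (coeff p i)) * (1 + \<bar>x\<bar> ^ degree p)"
      by (simp add: sum_distrib_right)
    also have "\<dots> \<le> C * (1 + \<bar>x\<bar> ^ degree p)"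
      unfolding C_def by (intro mult_right_mono) auto
    finally show "norm (poly p (complex_of_real x)) \<le> C * (1 + \<bar>x\<bar> ^ degree p)" .
  qed
qed

theorem lemma10:
  fixes \<phi> :: "real \<Rightarrow> complex" and p :: "complex poly" and d :: real and n :: nat
  assumes "schwartz \<phi>"
    and "d = infdist 0 (fsupp (fourier \<phi>))"
    and "d > 0"
    and "degree p = n"
  shows "\<exists>C>0. \<forall>x::real. \<forall>y>0.
           norm (poly p (complex_of_real x) *
                 conv \<phi> (\<lambda>t. complex_of_real (poisson_kernel y t)) x)
           \<le> C * (1 + y ^ n) * exp (- 2 * pi * d * y) / sqrt y"
proof -
  note sch = assms(1) and dpos = assms(3)
  define \<psi> where "\<psi> = (\<lambda>t. \<phi> (- t))"
  have sch\<psi>: "schwartz \<psi>" unfolding \<psi>_def by (rule schwartz_reflect[OF sch])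
  have r: "rapid \<phi>" by (rule schwartz_rapid[OF sch])
  have v: "fourier \<phi> \<xi> = 0" if "\<bar>\<xi>\<bar> < d" for \<xi>
  proof (rule ccontr)
    assume "fourier \<phi> \<xi> \<noteq> 0"
    then have "\<xi> \<in> {x. fourier \<phi> x \<noteq> 0}" by simp
    then have "\<xi> \<in> fsupp (fourier \<phi>)" unfolding fsupp_def by (rule subsetD[OF closure_subset])
    then have "infdist 0 (fsupp (fourier \<phi>)) \<le> dist 0 \<xi>" by (rule infdist_le)
    then have "d \<le> \<bar>\<xi>\<bar>" using assms(2) by (simp add: dist_real_def)
    then show False using that by linarith
  qed
  have v\<psi>: "fourier \<psi> \<xi> = 0" if "\<bar>\<xi>\<bar> < d" for \<xi>
    unfolding \<psi>_def fourier_reflect2 using v[of "- \<xi>"] that by simp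
  obtain K0 where K0: "K0 \<ge> 0" "\<And>z. Im z > 0 \<Longrightarrow> norm (z ^ 0 * (LINT \<xi>:{0<..}|lborel. fourier \<phi> \<xi> * E z \<xi>)) \<le> K0 * exp (- 2 * pi * d * Im z) / sqrt (Im z)"
    using halfline_bound[OF sch v dpos, of 0] by blast
  obtain K1 where K1: "K1 \<ge> 0" "\<And>z. Im z > 0 \<Longrightarrow> norm (z ^ n * (LINT \<xi>:{0<..}|lborel. fourier \<phi> \<xi> * E z \<xi>)) \<le> K1 * exp (- 2 * pi * d * Im z) / sqrt (Im z)"
    using halfline_bound[OF sch v dpos, of n] by blast
  obtain K2 where K2: "K2 \<ge> 0" "\<And>z. Im z > 0 \<Longrightarrow> norm (z ^ 0 * (LINT \<xi>:{0<..}|lborel. fourier \<psi> \<xi> * E z \<xi>)) \<le> K2 * exp (- 2 * pi * d * Im z) / sqrt (Im z)"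
    using halfline_bound[OF sch\<psi> v\<psi> dpos, of 0] by blast
  obtain K3 where K3: "K3 \<ge> 0" "\<And>z. Im z > 0 \<Longrightarrow> norm (z ^ n * (LINT \<xi>:{0<..}|lborel. fourier \<psi> \<xi> * E z \<xi>)) \<le> K3 * exp (- 2 * pi * d * Im z) / sqrt (Im z)"
    using halfline_bound[OF sch\<psi> v\<psi> dpos, of n] by blast
  obtain Cp where Cp: "Cp > 0" "\<And>x::real. norm (poly p (complex_of_real x)) \<le> Cp * (1 + \<bar>x\<bar> ^ n)"
    using poly_bound[of p] assms(4) by blast
  define S where "S = Cp * (K0 + K1 + K2 + K3)"
  have S0: "S \<ge> 0" unfolding S_def using Cp K0 K1 K2 K3 by simp
  show ?thesis
  proof (intro exI[of _ "S + 1"] conjI allI impI)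
    show "0 < S + 1" using S0 by simp
    fix x y :: real assume y: "y > 0"
    define z where "z = Complex x y"
    define w where "w = Complex (- x) y"
    have Iz: "Im z = y" "Im w = y" using y by (simp_all add: z_def w_def)
    have xz: "\<bar>x\<bar> \<le> norm z" "\<bar>x\<bar> \<le> norm w"
      using abs_Re_le_cmod[of z] abs_Re_le_cmod[of w] by (simp_all add: z_def w_def)
    define A where "A = (LINT \<xi>:{0<..}|lborel. fourier \<phi> \<xi> * E z \<xi>)"
    define B where "B = (LINT \<xi>:{0<..}|lborel. fourier \<psi> \<xi> * E w \<xi>)"
    define Q where "Q = exp (- 2 * pi * d * y) / sqrt y"
    have Q0: "Q > 0" using y by (simp add: Q_def)
    have conv: "conv \<phi> (\<lambda>t. complex_of_real (poisson_kernel y t)) x = A + B"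
      unfolding A_def B_def z_def w_def \<psi>_def by (rule conv_eq[OF r y])
    have a0: "norm A \<le> K0 * Q" using K0(2)[of z] Iz y by (simp add: A_def Q_def)
    have a1: "norm (z ^ n * A) \<le> K1 * Q" using K1(2)[of z] Iz y by (simp add: A_def Q_def)
    have b0: "norm B \<le> K2 * Q" using K2(2)[of w] Iz y by (simp add: B_def Q_def)
    have b1: "norm (w ^ n * B) \<le> K3 * Q" using K3(2)[of w] Iz y by (simp add: B_def Q_def)
    have "\<bar>x\<bar> ^ n * norm A \<le> norm (z ^ n * A)"
      using xz by (simp add: norm_mult norm_power mult_right_mono power_mono)
    moreover have "\<bar>x\<bar> ^ n * norm B \<le> norm (w ^ n * B)"
      using xz by (simp add: norm_mult norm_power mult_right_mono power_mono)
    ultimately have main: "(1 + \<bar>x\<bar> ^ n) * norm (A + B) \<le> (K0 + K1 + K2 + K3) * Q"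
    proof -
      assume h1: "\<bar>x\<bar> ^ n * norm A \<le> norm (z ^ n * A)" and h2: "\<bar>x\<bar> ^ n * norm B \<le> norm (w ^ n * B)"
      have "(1 + \<bar>x\<bar> ^ n) * norm (A + B) \<le> (1 + \<bar>x\<bar> ^ n) * (norm A + norm B)"
        by (intro mult_left_mono norm_triangle_ineq) auto
      also have "\<dots> = norm A + \<bar>x\<bar> ^ n * norm A + norm B + \<bar>x\<bar> ^ n * norm B" by (simp add: algebra_simps)
      also have "\<dots> \<le> (K0 + K1 + K2 + K3) * Q" using h1 h2 a0 a1 b0 b1 by (simp add: algebra_simps)
      finally show ?thesis .
    qed
    have "norm (poly p (complex_of_real x) * conv \<phi> (\<lambda>t. complex_of_real (poisson_kernel y t)) x)
        = norm (poly p (complex_of_real x)) * norm (A + B)" by (simp add: conv norm_mult)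
    also have "\<dots> \<le> Cp * (1 + \<bar>x\<bar> ^ n) * norm (A + B)"
      by (intro mult_right_mono Cp(2)) auto
    also have "\<dots> \<le> Cp * ((K0 + K1 + K2 + K3) * Q)"
      using main Cp(1) by (simp add: mult.assoc mult_left_mono)
    also have "\<dots> = S * Q" by (simp add: S_def)
    also have "\<dots> \<le> (S + 1) * (1 + y ^ n) * Q"
    proof -
      have "S \<le> (S + 1) * (1 + y ^ n)"
      proof -
        have "S * 1 \<le> (S + 1) * (1 + y ^ n)"
          using S0 y by (intro mult_mono) auto
        then show ?thesis by simp
      qed
      then show ?thesis using Q0 by (intro mult_right_mono) auto
    qed
    also have "\<dots> = (S + 1) * (1 + y ^ n) * exp (- 2 * pi * d * y) / sqrt y" by (simp add: Q_def)
    finally show "norm (poly p (complex_of_real x) * conv \<phi> (\<lambda>t. complex_of_real (poisson_kernel y t)) x)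
           \<le> (S + 1) * (1 + y ^ n) * exp (- 2 * pi * d * y) / sqrt y" .
  qed
qed

end
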